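(* Let $S$ be a probability law on $\{1,2,\dots\}$ and write $\hat S(\lambda)=\sum_{j\ge1}S(j)e^{ij\lambda}=\rho(\lambda)e^{i\tau(\lambda)}$ with $\rho(\lambda)=|\hat S(\lambda)|$. Then for all $r\in[0,1)$ and $\theta\in(-\pi,\pi)$, $$\frac14\int_{-\pi}^{\pi}\left(\frac1\pi+P_{r\rho(\lambda)}(\tau(\lambda)-\theta)+P_{r\rho(\lambda)}(\tau(\lambda)+\theta)\right)d\lambda=1.$$
   Context: $P_s(t)$ denotes the Poisson kernel $P_s(t)=\frac{1}{2\pi}\,\frac{1-s^2}{1-2s\cos t+s^2}$ for $s\in[0,1)$. *)

theory Defs
  imports "HOL-Analysis.Analysis"
begin

definition poisson_kernel :: "real \<Rightarrow> real \<Rightarrow> real" where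
  "poisson_kernel s t = (1 / (2 * pi)) * (1 - s^2) / (1 - 2 * s * cos t + s^2)"

definition S_hat :: "(nat \<Rightarrow> real) \<Rightarrow> real \<Rightarrow> complex" where
  "S_hat S l = (\<Sum>j. complex_of_real (S j) * cis (real j * l))"

definition prob_law_pos :: "(nat \<Rightarrow> real) \<Rightarrow> bool" where
  "prob_law_pos S \<longleftrightarrow> S 0 = 0 \<and> (\<forall>j. 0 \<le> S j) \<and> S sums 1"

end

theory Submission
  imports Defs "HOL-Complex_Analysis.Complex_Analysis"
begin

definition Gf :: "(nat \<Rightarrow> real) \<Rightarrow> complex \<Rightarrow> complex" where
  "Gf S z = (\<Sum>j. complex_of_real (S (Suc j)) * z ^ j)"

lemma law_tail:
  assumes "prob_law_pos S"
  shows "(\<lambda>j. S (Suc j)) sums 1"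
  using assms by (simp add: prob_law_pos_def sums_Suc_iff)

lemma G_unif:
  assumes "prob_law_pos S"
  shows "uniform_limit (cball 0 1) (\<lambda>n z. \<Sum>i<n. complex_of_real (S (Suc i)) * z ^ i) (Gf S) sequentially"
proof -
  have "uniform_limit (cball 0 1) (\<lambda>n z. \<Sum>i<n. complex_of_real (S (Suc i)) * z ^ i)
          (\<lambda>z. suminf (\<lambda>i. complex_of_real (S (Suc i)) * z ^ i)) sequentially"
  proof (rule Weierstrass_m_test)
    fix n and x :: complex assume "x \<in> cball 0 1"
    then have "norm x \<le> 1" by simp
    moreover have "S (Suc n) \<ge> 0" using assms by (simp add: prob_law_pos_def)
    ultimately show "norm (complex_of_real (S (Suc n)) * x ^ n) \<le> S (Suc n)"
      by (simp add: norm_mult norm_power mult_left_le power_le_one)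
  next
    show "summable (\<lambda>n. S (Suc n))" using law_tail[OF assms] sums_summable by blast
  qed
  then show ?thesis by (simp add: Gf_def[abs_def])
qed

lemma G_cont_hol:
  assumes "prob_law_pos S"
  shows "continuous_on (cball 0 1) (Gf S)" "Gf S holomorphic_on ball 0 1"
proof -
  have "eventually (\<lambda>n. continuous_on (cball 0 1) (\<lambda>z. \<Sum>i<n. complex_of_real (S (Suc i)) * z ^ i)
        \<and> (\<lambda>z. \<Sum>i<n. complex_of_real (S (Suc i)) * z ^ i) holomorphic_on ball 0 1) sequentially"
    by (intro always_eventually allI conjI) (auto intro!: continuous_intros holomorphic_intros)
  from holomorphic_uniform_limit[OF this G_unif[OF assms]]
  show "continuous_on (cball 0 1) (Gf S)" "Gf S holomorphic_on ball 0 1" by auto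
qed

lemma G_bound:
  assumes "prob_law_pos S" "cmod z \<le> 1"
  shows "cmod (Gf S z) \<le> 1"
proof -
  have nn: "\<And>j. S j \<ge> 0" using assms by (simp add: prob_law_pos_def)
  have sm: "summable (\<lambda>j. S (Suc j))" using law_tail[OF assms(1)] sums_summable by blast
  have le: "\<And>j. norm (complex_of_real (S (Suc j)) * z ^ j) \<le> S (Suc j)"
    using assms(2) nn by (simp add: norm_mult norm_power mult_left_le power_le_one)
  have sn: "summable (\<lambda>j. norm (complex_of_real (S (Suc j)) * z ^ j))"
    by (rule summable_comparison_test[OF _ sm]) (use le in auto)
  have "cmod (Gf S z) \<le> (\<Sum>j. norm (complex_of_real (S (Suc j)) * z ^ j))"
    unfolding Gf_def by (rule summable_norm[OF sn])
  also have "\<dots> \<le> (\<Sum>j. S (Suc j))" by (rule suminf_le[OF le sn sm])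
  also have "\<dots> = 1" using law_tail[OF assms(1)] sums_unique by metis
  finally show ?thesis .
qed

lemma S_hat_eq:
  assumes "prob_law_pos S"
  shows "S_hat S l = cis l * Gf S (cis l)"
proof -
  define f where "f j = complex_of_real (S j) * cis (real j * l)" for j
  have nn: "\<And>j. S j \<ge> 0" and s0: "S 0 = 0" and ss: "summable S"
    using assms by (auto simp: prob_law_pos_def sums_summable)
  have sf: "summable f"
    by (rule summable_norm_cancel, rule summable_comparison_test[OF _ ss]) (use nn in \<open>auto simp: f_def norm_mult\<close>)
  have "S_hat S l = suminf f" by (simp add: S_hat_def f_def[abs_def])
  also have "\<dots> = (\<Sum>n. f (Suc n))" using suminf_split_head[OF sf] s0 by (simp add: f_def)
  also have "\<dots> = (\<Sum>n. cis l * (complex_of_real (S (Suc n)) * cis l ^ n))"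
    by (rule suminf_cong) (simp add: f_def Complex.DeMoivre cis_mult[symmetric] algebra_simps)
  also have "\<dots> = cis l * Gf S (cis l)"
  proof -
    have "summable (\<lambda>n. complex_of_real (S (Suc n)) * cis l ^ n)"
      by (rule summable_norm_cancel, rule summable_comparison_test[OF _ summable_ignore_initial_segment[OF ss, of 1]])
         (use nn in \<open>auto simp: norm_mult norm_power\<close>)
    then show ?thesis unfolding Gf_def by (rule suminf_mult)
  qed
  finally show ?thesis .
qed

lemma kernel_Re:
  assumes "0 \<le> s" "s < 1"
  shows "Re ((1 + complex_of_real s * cis t) / (1 - complex_of_real s * cis t)) = 2 * pi * poisson_kernel s t"
proof -
  have sc: "(sin t)^2 + (cos t)^2 = 1" by simp
  have sc2: "sin t * sin t = 1 - cos t * cos t" using sc by (simp add: power2_eq_square)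
  have num: "Re (1 + complex_of_real s * cis t) * Re (1 - complex_of_real s * cis t)
     + Im (1 + complex_of_real s * cis t) * Im (1 - complex_of_real s * cis t) = 1 - s^2"
  proof -
    have "Re (1 + complex_of_real s * cis t) * Re (1 - complex_of_real s * cis t)
     + Im (1 + complex_of_real s * cis t) * Im (1 - complex_of_real s * cis t)
       = 1 - s^2"
      by (simp add: power2_eq_square algebra_simps sc2)
    then show ?thesis by simp
  qed
  have den: "(Re (1 - complex_of_real s * cis t))^2 + (Im (1 - complex_of_real s * cis t))^2
       = 1 - 2 * s * cos t + s^2"
  proof -
    have "(Re (1 - complex_of_real s * cis t))^2 + (Im (1 - complex_of_real s * cis t))^2
       = 1 - 2 * s * cos t + s^2"
      by (simp add: power2_eq_square algebra_simps sc2)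
    then show ?thesis by simp
  qed
  show ?thesis
    unfolding poisson_kernel_def Re_divide num den by simp
qed

lemma key:
  assumes law: "prob_law_pos S" and r: "0 \<le> r" "r < 1"
  shows "((\<lambda>l. poisson_kernel (r * cmod (S_hat S l)) (Arg (S_hat S l) + \<phi>)) has_integral 1) {-pi..pi}"
proof -
  define c where "c = complex_of_real r * cis \<phi>"
  define G where "G = Gf S"
  have cG: "continuous_on (cball 0 1) G" and hG: "G holomorphic_on ball 0 1"
    using G_cont_hol[OF law] by (auto simp: G_def)
  have cc: "cmod c = r" using r by (simp add: c_def norm_mult)
  have nz: "1 - c * z * G z \<noteq> 0" if "cmod z \<le> 1" for z
  proof
    assume "1 - c * z * G z = 0"
    then have "c * z * G z = 1" by simp
    then have "cmod (c * z * G z) = 1" by simp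
    moreover have "cmod (c * z * G z) \<le> r * 1 * 1"
      unfolding norm_mult cc
      using that G_bound[OF law that] r by (intro mult_mono) (auto simp: G_def)
    ultimately show False using r by simp
  qed
  define h where "h z = 2 * c * G z / (1 - c * z * G z)" for z
  have ch: "continuous_on (cball 0 1) h"
    unfolding h_def by (intro continuous_intros cG) (use nz in auto)
  have hh: "h holomorphic_on ball 0 1"
    unfolding h_def by (intro holomorphic_intros hG) (use nz in auto)
  have "(h has_contour_integral 0) (part_circlepath 0 1 (-pi) pi)"
  proof (rule Cauchy_theorem_convex[where K="{}"])
    show "continuous_on (cball 0 1) h" by (rule ch)
    show "convex (cball (0::complex) 1)" by simp
    show "finite ({}::complex set)" by simp
    fix x assume "x \<in> interior (cball (0::complex) 1) - {}"
    then have "x \<in> ball 0 1" by simp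
    then show "h field_differentiable at x"
      using hh holomorphic_on_imp_differentiable_at open_ball by blast
  next
    show "valid_path (part_circlepath 0 1 (-pi) pi)" by simp
    show "path_image (part_circlepath 0 1 (-pi) pi) \<subseteq> cball 0 1"
      using path_image_part_circlepath_subset[of "-pi" pi 1 0] by auto
    show "pathfinish (part_circlepath 0 1 (-pi) pi) = pathstart (part_circlepath 0 1 (- pi) pi)"
    proof -
      have c1: "cis pi = -1" by (simp add: complex_eq_iff)
      have e1: "exp (\<i> * complex_of_real pi) = -1" by (metis c1 cis_conv_exp)
      have e2: "exp (- (\<i> * complex_of_real pi)) = -1" by (simp only: exp_minus e1) simp
      show ?thesis by (simp add: e1 e2)
    qed
  qed
  note C = this
  have pp: "-pi < pi" by simp
  have I0: "((\<lambda>t. h (0 + complex_of_real 1 * cis t) * complex_of_real 1 * \<i> * cis t) has_integral 0) {-pi..pi}"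
    by (rule iffD1[OF has_contour_integral_part_circlepath_iff[OF pp] C])
  have "((\<lambda>t. h (0 + complex_of_real 1 * cis t) * complex_of_real 1 * \<i> * cis t * (- \<i>)) has_integral 0 * (- \<i>)) {-pi..pi}"
    by (rule has_integral_mult_left[OF I0])
  note J = this
  have E: "h (0 + complex_of_real 1 * cis t) * complex_of_real 1 * \<i> * cis t * (- \<i>) = h (cis t) * cis t" for t
  proof -
    have "h (0 + complex_of_real 1 * cis t) * complex_of_real 1 * \<i> * cis t * (- \<i>) = h (cis t) * cis t * (- (\<i> * \<i>))"
      by (simp only: of_real_1 mult_1_left mult_1_right add_0_left mult_minus_right mult_minus_left) (simp only: mult_ac)
    then show ?thesis by simp
  qed
  have "((\<lambda>t. h (cis t) * cis t) has_integral 0 * (- \<i>)) {-pi..pi}"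
    by (rule has_integral_eq[OF _ J]) (rule E)
  then have "((\<lambda>t. h (cis t) * cis t) has_integral 0) {-pi..pi}"
    by (simp only: mult_zero_left)
  note J3 = this
  have I1: "((\<lambda>t. Re (h (cis t) * cis t)) has_integral 0) {-pi..pi}"
    using has_integral_Re[OF J3] by (simp only: zero_complex.sel)
  have I2: "((\<lambda>t. (Re (h (cis t) * cis t) + 1) / (2 * pi)) has_integral 1) {-pi..pi}"
  proof -
    have "((\<lambda>t. Re (h (cis t) * cis t) + 1) has_integral (0 + Henstock_Kurzweil_Integration.content {-pi..pi} *\<^sub>R 1)) {-pi..pi}"
      by (rule has_integral_add[OF I1 has_integral_const_real])
    then have "((\<lambda>t. Re (h (cis t) * cis t) + 1) has_integral (2 * pi)) {-pi..pi}" by simp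
    from has_integral_divide[OF this, of "2 * pi"] show ?thesis by simp
  qed
  show ?thesis
  proof (rule has_integral_eq[OF _ I2])
    fix l :: real
    define A where "A = S_hat S l"
    define w where "w = c * A"
    have A: "A = cis l * G (cis l)" using S_hat_eq[OF law] by (simp add: A_def G_def)
    have w1: "1 - w \<noteq> 0" using nz[of "cis l"] by (simp add: w_def A mult.assoc)
    have weq: "w = complex_of_real (r * cmod A) * cis (Arg A + \<phi>)"
    proof -
      have "A = complex_of_real (cmod A) * cis (Arg A)" using rcis_cmod_Arg[of A] by (simp add: rcis_def)
      then have "w = c * (complex_of_real (cmod A) * cis (Arg A))" by (simp add: w_def)
      also have "\<dots> = complex_of_real (r * cmod A) * cis (Arg A + \<phi>)"
        by (simp add: c_def cis_mult algebra_simps)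
      finally show ?thesis .
    qed
    have s01: "0 \<le> r * cmod A" "r * cmod A < 1"
    proof -
      have "cmod A \<le> 1" using G_bound[OF law, of "cis l"] by (simp add: A norm_mult G_def)
      then show "0 \<le> r * cmod A" "r * cmod A < 1" using r
        using mult_left_mono[of "cmod A" 1 r] by auto
    qed
    have "(1 + w) / (1 - w) = 1 + h (cis l) * cis l"
      using w1 by (simp add: h_def w_def A field_simps)
    then have "Re (h (cis l) * cis l) + 1 = Re ((1 + w) / (1 - w))" by simp
    also have "\<dots> = 2 * pi * poisson_kernel (r * cmod A) (Arg A + \<phi>)"
      unfolding weq by (rule kernel_Re[OF s01])
    finally show "(Re (h (cis l) * cis l) + 1) / (2 * pi) = poisson_kernel (r * cmod (S_hat S l)) (Arg (S_hat S l) + \<phi>)"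
      by (simp add: A_def)
  qed
qed

theorem lemma5p2:
  fixes S :: "nat \<Rightarrow> real" and r \<theta> :: real
  assumes "prob_law_pos S"
    and "0 \<le> r" and "r < 1"
    and "-pi < \<theta>" and "\<theta> < pi"
  shows "((\<lambda>l. (1/4) * (1 / pi
            + poisson_kernel (r * cmod (S_hat S l)) (Arg (S_hat S l) - \<theta>)
            + poisson_kernel (r * cmod (S_hat S l)) (Arg (S_hat S l) + \<theta>)))
          has_integral 1) {-pi..pi}"
proof -
  have k1: "((\<lambda>l. poisson_kernel (r * cmod (S_hat S l)) (Arg (S_hat S l) - \<theta>)) has_integral 1) {-pi..pi}"
    using key[OF assms(1-3), of "-\<theta>"] by simp
  note k2 = key[OF assms(1-3), of \<theta>]
  have "((\<lambda>l. 1 / pi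
            + poisson_kernel (r * cmod (S_hat S l)) (Arg (S_hat S l) - \<theta>)
            + poisson_kernel (r * cmod (S_hat S l)) (Arg (S_hat S l) + \<theta>)) has_integral
         (Henstock_Kurzweil_Integration.content {-pi..pi} *\<^sub>R (1 / pi) + 1 + 1)) {-pi..pi}"
    by (rule has_integral_add[OF has_integral_add[OF has_integral_const_real k1] k2])
  then have "((\<lambda>l. 1 / pi
            + poisson_kernel (r * cmod (S_hat S l)) (Arg (S_hat S l) - \<theta>)
            + poisson_kernel (r * cmod (S_hat S l)) (Arg (S_hat S l) + \<theta>)) has_integral 4) {-pi..pi}"
    by simp
  from has_integral_mult_right[OF this, of "1/4"] show ?thesis by simp
qed

end
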